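(* We have $\mathfrak{b}_1^2(x) + \mathfrak{b}_{-1}^2(x) > 0$ for every $x \in \mathbb{R}$, and also \[ \mathrm{span} \{\mathfrak{b}_{\pm 1}(\cdot)\} = \mathrm{span} \{\cos(2\pi \cdot),\sin(2\pi \cdot)\} = \{L \sin(2\pi\cdot + \eta) : L,\eta \in \mathbb{R} \}. \]
   Context: For a traveling pulse $u^*$ (speed $c$) of $\mathrm{d}u=Au\,\mathrm{d}t+f(u)\,\mathrm{d}t$ on $\mathcal X=H^{s,p}(\mathbb{R};\mathbb{R}^n)$ with linearization $\mathcal L=A+c\partial_x+f'(u^* )$, let $\psi$ be the bounded functional with $\Pi^cf=-\langle\psi,f\rangle\partial_xu^*$, $\Pi^c$ the spectral projection onto $\mathrm{span}\{\partial_xu^*\}$. Let $\mathcal T_xf=f(\cdot-x)$ and $\pi_{\mathrm{iso}}$ the isochron map (upright $\pi$ in the paper, not the circle constant; defined by $\lim_{t\to\infty}\|u^v(t)-u^*(\cdot-ct-\pi_{\mathrm{iso}}(v))\|_{\mathcal X}=0$), which satisfies $\pi_{\mathrm{iso}}'(\mathcal T_xu^* )[v]=\langle\mathcal T_x\psi,v\rangle$. Noise basis $e_1(x)=\sqrt2\cos(2\pi x)$, $e_{-1}(x)=-\sqrt2\sin(2\pi x)$ (generally $e_k=\sqrt2\cos(2\pi kx)$ for $k>0$, $e_0=1$, $e_k=\sqrt2\sin(2\pi kx)$ for $k<0$), noise coefficients $\alpha_k$, nonlinearity $g$. Define $\mathfrak b_k(x)=\alpha_k\pi_{\mathrm{iso}}'(\mathcal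 T_xu^* )[g(\mathcal T_xu^* )e_k]=\alpha_k\langle\mathcal T_x[\psi g(u^* )],e_k\rangle$. Assume $\alpha_1\ne0$, $\alpha_{-1}\ne0$ and that there exists $x\in\mathbb{R}$ with $\langle\psi g(u^* ),\sin(2\pi\cdot+x)\rangle\ne0$. *)

theory Defs
  imports "HOL-Analysis.Analysis" "HOL-Library.Function_Algebras"
begin

definition ebasis :: "int \<Rightarrow> real \<Rightarrow> real" where
  "ebasis k x = (if k = 0 then 1
     else if k > 0 then sqrt 2 * cos (2 * pi * real_of_int k * x)
     else sqrt 2 * sin (2 * pi * real_of_int k * x))"

definition pairing :: "(real \<Rightarrow> real) \<Rightarrow> (real \<Rightarrow> real) \<Rightarrow> real" where
  "pairing f g = (\<integral>y. f y * g y \<partial>lborel)"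

definition transl :: "real \<Rightarrow> (real \<Rightarrow> real) \<Rightarrow> real \<Rightarrow> real" where
  "transl x f = (\<lambda>y. f (y - x))"

text \<open>b_k(x) = alpha_k < T_x [psi g(u*)], e_k >, with h standing for the scalar function psi g(u*).\<close>
definition bfrak :: "(int \<Rightarrow> real) \<Rightarrow> (real \<Rightarrow> real) \<Rightarrow> int \<Rightarrow> real \<Rightarrow> real" where
  "bfrak \<alpha> h k x = \<alpha> k * pairing (transl x h) (ebasis k)"

definition fscale :: "real \<Rightarrow> ('a \<Rightarrow> real) \<Rightarrow> 'a \<Rightarrow> real" where
  "fscale c f = (\<lambda>x. c * f x)"

abbreviation fspan :: "('a \<Rightarrow> real) set \<Rightarrow> ('a \<Rightarrow> real) set" where
  "fspan \<equiv> module.span fscale"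

end

theory Submission imports Defs begin

lemma fmod: "module (fscale :: real \<Rightarrow> ('a \<Rightarrow> real) \<Rightarrow> _)"
  by unfold_locales (auto simp: fscale_def algebra_simps)

lemma span2: "fspan {f, g} = {(\<lambda>x. a * f x + b * (g::'a\<Rightarrow>real) x) | a b. True}"
proof -
  interpret m: module "fscale :: real \<Rightarrow> ('a \<Rightarrow> real) \<Rightarrow> _" by (rule fmod)
  show ?thesis
    unfolding m.span_insert m.span_empty
  proof (intro set_eqI iffI)
    fix u assume "u \<in> {x. \<exists>k. x - fscale k f \<in> {x. \<exists>k. x - fscale k g \<in> {0}}}"
    then obtain k l where "u - fscale k f - fscale l g = 0" by auto
    hence "u = (\<lambda>x. k * f x + l * g x)" by (auto simp: fun_eq_iff fscale_def algebra_simps)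
    thus "u \<in> {(\<lambda>x. a * f x + b * (g::'a\<Rightarrow>real) x) | a b. True}" by blast
  next
    fix u assume "u \<in> {(\<lambda>x. a * f x + b * (g::'a\<Rightarrow>real) x) | a b. True}"
    then obtain k l where "u = (\<lambda>x. k * f x + l * g x)" by auto
    hence "u - fscale k f - fscale l g = 0" by (auto simp: fun_eq_iff fscale_def algebra_simps)
    thus "u \<in> {x. \<exists>k. x - fscale k f \<in> {x. \<exists>k. x - fscale k g \<in> {0}}}" by blast
  qed
qed

lemma intsh: "(\<integral>y. h (y - x) * k y \<partial>lborel) = (\<integral>z. h z * k (x + z) \<partial>lborel)"
  for h k :: "real \<Rightarrow> real"
  using lborel_integral_real_affine[where c=1 and t=x and f="\<lambda>y. h (y - x) * k y"] by simp

lemma intbd: assumes "integrable lborel h" "k \<in> borel_measurable borel" "\<And>x. \<bar>k x\<bar> \<le> 1"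
  shows "integrable lborel (\<lambda>z. h z * k z :: real)"
proof (rule Bochner_Integration.integrable_bound[OF assms(1)])
  show "(\<lambda>z. h z * k z) \<in> borel_measurable lborel" using assms(1,2) by measurable
  show "AE x in lborel. norm (h x * k x) \<le> norm (h x)"
    using assms(3) by (auto simp: abs_mult intro!: mult_left_le)
qed

lemma aux_div: "(D::real) \<noteq> 0 \<Longrightarrow> (X1 / D) * Y1 + (X2 / D) * Y2 = (X1 * Y1 + X2 * Y2) / D"
  by (simp add: add_divide_distrib)

lemma sincos_span:
  "{(\<lambda>x. a * cos (2 * pi * x) + b * sin (2 * pi * x)) | a b. True}
     = {(\<lambda>x. L * sin (2 * pi * x + \<eta>)) | L \<eta>. True}"
proof (intro set_eqI iffI)
  fix u assume "u \<in> {(\<lambda>x. a * cos (2 * pi * x) + b * sin (2 * pi * x)) | a b. True}"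
  then obtain a b where u: "u = (\<lambda>x. a * cos (2 * pi * x) + b * sin (2 * pi * x))" by auto
  show "u \<in> {(\<lambda>x. L * sin (2 * pi * x + \<eta>)) | L \<eta>. True}"
  proof (cases "a = 0 \<and> b = 0")
    case True
    hence "u = (\<lambda>x. 0 * sin (2 * pi * x + 0))" using u by auto
    thus ?thesis by blast
  next
    case False
    define L where "L = sqrt (a\<^sup>2 + b\<^sup>2)"
    have pos: "a\<^sup>2 + b\<^sup>2 > 0" using False by (simp add: sum_power2_gt_zero_iff)
    hence Lpos: "L > 0" unfolding L_def by simp
    have LL: "L\<^sup>2 = a\<^sup>2 + b\<^sup>2" unfolding L_def using pos by simp
    have "(b / L)\<^sup>2 + (a / L)\<^sup>2 = 1" using LL pos False by (simp add: power_divide add_divide_distrib[symmetric] add.commute)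
    then obtain t where t: "b / L = cos t" "a / L = sin t" by (rule sincos_total_2pi) auto
    have ab: "a = L * sin t" "b = L * cos t" using t Lpos by (auto simp: field_simps)
    have "u = (\<lambda>x. L * sin (2 * pi * x + t))"
      unfolding u ab by (auto simp: fun_eq_iff sin_add algebra_simps)
    thus ?thesis by blast
  qed
next
  fix u assume "u \<in> {(\<lambda>x. L * sin (2 * pi * x + \<eta>)) | L \<eta>. True}"
  then obtain L t where u: "u = (\<lambda>x. L * sin (2 * pi * x + t))" by auto
  have "u = (\<lambda>x. (L * sin t) * cos (2 * pi * x) + (L * cos t) * sin (2 * pi * x))"
    unfolding u by (auto simp: fun_eq_iff sin_add algebra_simps)
  thus "u \<in> {(\<lambda>x. a * cos (2 * pi * x) + b * sin (2 * pi * x)) | a b. True}" by blast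
qed

theorem lemma4p3:
  fixes \<alpha> :: "int \<Rightarrow> real" and h :: "real \<Rightarrow> real"
  assumes h_int: "integrable lborel h"
    and a1: "\<alpha> 1 \<noteq> 0" and am1: "\<alpha> (-1) \<noteq> 0"
    and nondeg: "\<exists>x. pairing h (\<lambda>y. sin (2 * pi * y + x)) \<noteq> 0"
  shows "(\<forall>x. (bfrak \<alpha> h 1 x)\<^sup>2 + (bfrak \<alpha> h (-1) x)\<^sup>2 > 0)
    \<and> fspan {bfrak \<alpha> h 1, bfrak \<alpha> h (-1)} = fspan {\<lambda>x. cos (2 * pi * x), \<lambda>x. sin (2 * pi * x)}
    \<and> fspan {\<lambda>x. cos (2 * pi * x), \<lambda>x. sin (2 * pi * x)}
        = {(\<lambda>x. L * sin (2 * pi * x + \<eta>)) | L \<eta>. True}"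
proof -
  define C where "C = (\<integral>z. h z * cos (2 * pi * z) \<partial>lborel)"
  define S where "S = (\<integral>z. h z * sin (2 * pi * z) \<partial>lborel)"
  have ic: "integrable lborel (\<lambda>z. h z * cos (2 * pi * z))"
    by (rule intbd[OF h_int]) auto
  have isn: "integrable lborel (\<lambda>z. h z * sin (2 * pi * z))"
    by (rule intbd[OF h_int]) auto
  have lin: "(\<integral>z. h z * (a * cos (2 * pi * z) + b * sin (2 * pi * z)) \<partial>lborel) = a * C + b * S"
    for a b
  proof -
    have "(\<integral>z. h z * (a * cos (2 * pi * z) + b * sin (2 * pi * z)) \<partial>lborel)
       = (\<integral>z. a * (h z * cos (2 * pi * z)) + b * (h z * sin (2 * pi * z)) \<partial>lborel)"
      by (simp add: algebra_simps)
    also have "\<dots> = a * C + b * S"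
      unfolding C_def S_def using ic isn by simp
    finally show ?thesis .
  qed
  have b1: "bfrak \<alpha> h 1 x = \<alpha> 1 * sqrt 2 * (C * cos (2 * pi * x) - S * sin (2 * pi * x))" for x
  proof -
    have "bfrak \<alpha> h 1 x = \<alpha> 1 * (\<integral>z. h z * (sqrt 2 * cos (2 * pi * (x + z))) \<partial>lborel)"
      unfolding bfrak_def pairing_def transl_def ebasis_def
      using intsh[of h x "\<lambda>y. sqrt 2 * cos (2 * pi * y)"] by simp
    also have "(\<lambda>z. h z * (sqrt 2 * cos (2 * pi * (x + z)))) = (\<lambda>z. h z *
       ((sqrt 2 * cos (2 * pi * x)) * cos (2 * pi * z) + (- sqrt 2 * sin (2 * pi * x)) * sin (2 * pi * z)))"
      by (auto simp: fun_eq_iff distrib_left cos_add algebra_simps)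
    finally show ?thesis unfolding lin by (simp add: algebra_simps)
  qed
  have bm: "bfrak \<alpha> h (-1) x = - \<alpha> (-1) * sqrt 2 * (S * cos (2 * pi * x) + C * sin (2 * pi * x))" for x
  proof -
    have "bfrak \<alpha> h (-1) x = \<alpha> (-1) * (\<integral>z. h z * (- sqrt 2 * sin (2 * pi * (x + z))) \<partial>lborel)"
      unfolding bfrak_def pairing_def transl_def ebasis_def
      using intsh[of h x "\<lambda>y. - sqrt 2 * sin (2 * pi * y)"] by simp
    also have "(\<lambda>z. h z * (- sqrt 2 * sin (2 * pi * (x + z)))) = (\<lambda>z. h z *
       ((- sqrt 2 * sin (2 * pi * x)) * cos (2 * pi * z) + (- sqrt 2 * cos (2 * pi * x)) * sin (2 * pi * z)))"
      by (auto simp: fun_eq_iff distrib_left sin_add algebra_simps)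
    finally show ?thesis unfolding lin by (simp add: algebra_simps)
  qed
  have CS: "C\<^sup>2 + S\<^sup>2 > 0"
  proof -
    obtain x where x: "pairing h (\<lambda>y. sin (2 * pi * y + x)) \<noteq> 0" using nondeg by blast
    have "pairing h (\<lambda>y. sin (2 * pi * y + x)) = (\<integral>z. h z * (sin x * cos (2 * pi * z) + cos x * sin (2 * pi * z)) \<partial>lborel)"
      unfolding pairing_def by (simp add: sin_add algebra_simps)
    hence "sin x * C + cos x * S \<noteq> 0" using x lin by simp
    hence "C \<noteq> 0 \<or> S \<noteq> 0" by auto
    thus ?thesis by (simp add: sum_power2_gt_zero_iff)
  qed
  have P1: "(bfrak \<alpha> h 1 x)\<^sup>2 + (bfrak \<alpha> h (-1) x)\<^sup>2 > 0" for x
  proof (rule ccontr)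
    assume "\<not> ?thesis"
    hence "bfrak \<alpha> h 1 x = 0 \<and> bfrak \<alpha> h (-1) x = 0"
      by (simp add: sum_power2_gt_zero_iff)
    hence e1: "C * cos (2 * pi * x) - S * sin (2 * pi * x) = 0"
      and e2: "S * cos (2 * pi * x) + C * sin (2 * pi * x) = 0"
      using b1 bm a1 am1 by auto
    have sc: "(cos (2 * pi * x))\<^sup>2 + (sin (2 * pi * x))\<^sup>2 = 1" by simp
    have "cos (2 * pi * x) * (C * cos (2 * pi * x) - S * sin (2 * pi * x))
             + sin (2 * pi * x) * (S * cos (2 * pi * x) + C * sin (2 * pi * x))
          = C * (cos (2 * pi * x) * cos (2 * pi * x) + sin (2 * pi * x) * sin (2 * pi * x))"
      by algebra
      also have "\<dots> = C" by (simp add: sin_cos_squared_add3)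
      finally have "C = 0" by (metis e1 e2 mult_zero_right add_0)
    have "- sin (2 * pi * x) * (C * cos (2 * pi * x) - S * sin (2 * pi * x))
             + cos (2 * pi * x) * (S * cos (2 * pi * x) + C * sin (2 * pi * x))
          = S * (cos (2 * pi * x) * cos (2 * pi * x) + sin (2 * pi * x) * sin (2 * pi * x))"
      by algebra
      also have "\<dots> = S" by (simp add: sin_cos_squared_add3)
      finally have "S = 0" by (metis e1 e2 mult_zero_right add_0)
    show False using CS \<open>C = 0\<close> \<open>S = 0\<close> by simp
  qed
  define u where "u = \<alpha> 1 * sqrt 2"
  define v where "v = - \<alpha> (-1) * sqrt 2"
  have u0: "u \<noteq> 0" and v0: "v \<noteq> 0" using a1 am1 by (auto simp: u_def v_def)
  have B1: "bfrak \<alpha> h 1 = (\<lambda>x. u * (C * cos (2 * pi * x) - S * sin (2 * pi * x)))"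
    using b1 by (auto simp: u_def)
  have Bm: "bfrak \<alpha> h (-1) = (\<lambda>x. v * (S * cos (2 * pi * x) + C * sin (2 * pi * x)))"
    using bm by (auto simp: v_def)
  have P2: "{(\<lambda>x. a * bfrak \<alpha> h 1 x + b * bfrak \<alpha> h (-1) x) | a b. True}
      = {(\<lambda>x. a * cos (2 * pi * x) + b * sin (2 * pi * x)) | a b. True}"
  proof (intro set_eqI iffI)
    fix w assume "w \<in> {(\<lambda>x. a * bfrak \<alpha> h 1 x + b * bfrak \<alpha> h (-1) x) | a b. True}"
    then obtain a b where w: "w = (\<lambda>x. a * bfrak \<alpha> h 1 x + b * bfrak \<alpha> h (-1) x)" by auto
    have "w = (\<lambda>x. (a * u * C + b * v * S) * cos (2 * pi * x) + (- a * u * S + b * v * C) * sin (2 * pi * x))"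
      unfolding w B1 Bm by (auto simp: fun_eq_iff algebra_simps)
    thus "w \<in> {(\<lambda>x. a * cos (2 * pi * x) + b * sin (2 * pi * x)) | a b. True}" by blast
  next
    fix w assume "w \<in> {(\<lambda>x. a * cos (2 * pi * x) + b * sin (2 * pi * x)) | a b. True}"
    then obtain p q where w: "w = (\<lambda>x. p * cos (2 * pi * x) + q * sin (2 * pi * x))" by auto
    define D where "D = C\<^sup>2 + S\<^sup>2"
    have D0: "D \<noteq> 0" using CS unfolding D_def by linarith
    define a where "a = (p * C - q * S) / (D * u)"
    define b where "b = (p * S + q * C) / (D * v)"
    have "w = (\<lambda>x. a * bfrak \<alpha> h 1 x + b * bfrak \<alpha> h (-1) x)"
    proof
      fix x
      have e1: "a * bfrak \<alpha> h 1 x + b * bfrak \<alpha> h (-1) x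
         = ((p * C - q * S) * (C * cos (2 * pi * x) - S * sin (2 * pi * x))
           + (p * S + q * C) * (S * cos (2 * pi * x) + C * sin (2 * pi * x))) / D"
      proof -
        have au: "a * u = (p * C - q * S) / D" using u0 by (simp add: a_def)
        have bv: "b * v = (p * S + q * C) / D" using v0 by (simp add: b_def)
        have "a * bfrak \<alpha> h 1 x + b * bfrak \<alpha> h (-1) x
           = (a * u) * (C * cos (2 * pi * x) - S * sin (2 * pi * x))
             + (b * v) * (S * cos (2 * pi * x) + C * sin (2 * pi * x))"
          unfolding B1 Bm by (simp add: mult.assoc)
        thus ?thesis unfolding au bv by (simp only: aux_div[OF D0])
      qed
      have e2: "((p * C - q * S) * (C * cos (2 * pi * x) - S * sin (2 * pi * x))
           + (p * S + q * C) * (S * cos (2 * pi * x) + C * sin (2 * pi * x)))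
          = (p * cos (2 * pi * x) + q * sin (2 * pi * x)) * D"
        unfolding D_def by (simp add: algebra_simps power2_eq_square)
      show "w x = a * bfrak \<alpha> h 1 x + b * bfrak \<alpha> h (-1) x" using e1 e2 D0 w by simp
    qed
    thus "w \<in> {(\<lambda>x. a * bfrak \<alpha> h 1 x + b * bfrak \<alpha> h (-1) x) | a b. True}" by blast
  qed
  show ?thesis
    using P1 P2 sincos_span by (simp add: span2)
qed

end
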